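(* Let $n,p\ge1$. For each $i\in\{1,\dots,n\}$, $\lambda_i(\delta_{(n,p)})=0$, and for each $j\in\{1,\dots,p\}$, $\rho_j(\delta_{(n,p)})=0$.
   Context: Work over a field of characteristic $0$. $F_{(m,q)}$ is the Lie algebra generated by $x_{i,j}$, $(i,j)\in\{1,\dots,m\}\times\{1,\dots,q\}$, with defining relations $[x_{i,j},x_{i',j'}]=0$ whenever $i\ne i'$ and $j\ne j'$ (quotient of the free Lie algebra); it is graded by total degree ($\deg x_{i,j}=1$) and $\widehat F_{(m,q)}$ is its completion. $\lambda_i:\widehat F_{(n,p)}\to\widehat F_{(n-1,p)}$ is the continuous Lie algebra morphism with $x_{i',j'}\mapsto x_{i',j'}$ if $i'<i$, $\mapsto0$ if $i'=i$, $\mapsto x_{i'-1,j'}$ if $i'>i$; $\rho_j:\widehat F_{(n,p)}\to\widehat F_{(n,p-1)}$ is the continuous Lie morphism with $x_{i',j'}\mapsto x_{i',j'}$ if $j'<j$, $\mapsto0$ if $j'=j$, $\mapsto x_{i',j'-1}$ if $j'>j$. For elements of positive valuation, $y_1\star\cdots\star y_N$ denotes the Campbell–Baker–Hausdorff series with $\exp(y_1\star\cdots\star y_N)=\exp(y_1)\cdots\exp(y_N)$ (empty product $=0$). Define $$\delta_{(n,p)}=\sum_{k=0}^n\sum_{l=0}^p\sum_{\substack{1\le i_1<\cdots<i_k\le n\\1\le j_1<\cdots<j_l\le p}}(-1)^{n+p-k-l}(x_{i_1,j_1}\star\cdots\star x_{i_1,j_l})\star\cdots\star(x_{i_k,j_1}\star\cdots\star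 x_{i_k,j_l})\in\widehat{F}_{(n,p)}.$$ *)

theory Defs
  imports Main
begin

text \<open>
  Letters are pairs (i,j) of naturals standing for the generators x_{i,j}.
  Elements of the completed free associative algebra on these letters are
  formal noncommutative power series, i.e. functions from words to the field.
  The completed Lie algebra F^_{(m,q)} embeds (PBW, characteristic 0) into the
  completed universal enveloping algebra, which is the completed free associative
  algebra modulo the closed two-sided ideal generated by the relations
  x_{i,j} x_{i',j'} - x_{i',j'} x_{i,j} for i /= i' and j /= j'.
\<close>

type_synonym letter = "nat \<times> nat"
type_synonym 'a ser = "letter list \<Rightarrow> 'a"

definition ser_one :: "'a::field ser" where
  "ser_one w = (if w = [] then 1 else 0)"

definition ser_gen :: "nat \<Rightarrow> nat \<Rightarrow> 'a::field ser" where
  "ser_gen i j w = (if w = [(i, j)] then 1 else 0)"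

definition ser_mul :: "'a::field ser \<Rightarrow> 'a ser \<Rightarrow> 'a ser" where
  "ser_mul f g w = (\<Sum>k\<le>length w. f (take k w) * g (drop k w))"

fun ser_pow :: "'a::field ser \<Rightarrow> nat \<Rightarrow> 'a ser" where
  "ser_pow f 0 = ser_one"
| "ser_pow f (Suc k) = ser_mul f (ser_pow f k)"

text \<open>exp of a series with zero constant term (only terms k <= length w contribute to
  the coefficient of w).\<close>
definition ser_exp :: "'a::field_char_0 ser \<Rightarrow> 'a ser" where
  "ser_exp f w = (\<Sum>k\<le>length w. ser_pow f k w / fact k)"

text \<open>log of a series with constant term 1: log(1+g) = sum_{k>=1} (-1)^(k+1) g^k / k.\<close>
definition ser_log :: "'a::field_char_0 ser \<Rightarrow> 'a ser" where
  "ser_log f w = (let g = (\<lambda>u. f u - ser_one u) in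
     (\<Sum>k\<in>{1..length w}. (-1) ^ (k + 1) * ser_pow g k w / of_nat k))"

text \<open>Campbell-Baker-Hausdorff product y_1 * ... * y_N := log(exp y_1 ... exp y_N);
  empty product gives log 1 = 0.\<close>
definition cbh :: "'a::field_char_0 ser list \<Rightarrow> 'a ser" where
  "cbh ys = ser_log (foldr (\<lambda>y acc. ser_mul (ser_exp y) acc) ys ser_one)"

definition delta :: "nat \<Rightarrow> nat \<Rightarrow> 'a::field_char_0 ser" where
  "delta n p w = (\<Sum>I\<in>Pow {1..n}. \<Sum>J\<in>Pow {1..p}.
      (-1) ^ (n + p - card I - card J) *
      cbh (map (\<lambda>i. cbh (map (\<lambda>j. ser_gen i j) (sorted_list_of_set J)))
               (sorted_list_of_set I)) w)"

text \<open>Continuous algebra morphism induced by a substitution of letters, where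
  sigma x = None means x is sent to 0 and sigma x = Some y means x is sent to y.\<close>
definition ser_subst :: "(letter \<Rightarrow> letter option) \<Rightarrow> 'a::field ser \<Rightarrow> 'a ser" where
  "ser_subst \<sigma> f w = (\<Sum>u\<in>{u. length u = length w \<and> map \<sigma> u = map Some w}. f u)"

definition lam :: "nat \<Rightarrow> 'a::field ser \<Rightarrow> 'a ser" where
  "lam i = ser_subst (\<lambda>(a, b). if a < i then Some (a, b) else if a = i then None
                               else Some (a - 1, b))"

definition rho :: "nat \<Rightarrow> 'a::field ser \<Rightarrow> 'a ser" where
  "rho j = ser_subst (\<lambda>(a, b). if b < j then Some (a, b) else if b = j then None
                               else Some (a, b - 1))"

definition commuting :: "letter \<Rightarrow> letter \<Rightarrow> bool" where
  "commuting x y \<longleftrightarrow> fst x \<noteq> fst y \<and> snd x \<noteq> snd y"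

inductive rel_ideal :: "'a::field ser \<Rightarrow> bool" where
  zero: "rel_ideal (\<lambda>_. 0)"
| gen: "commuting x y \<Longrightarrow>
     rel_ideal (\<lambda>w. (if w = u @ [x, y] @ v then 1 else 0) - (if w = u @ [y, x] @ v then 1 else 0))"
| add: "rel_ideal f \<Longrightarrow> rel_ideal g \<Longrightarrow> rel_ideal (\<lambda>w. f w + g w)"
| smult: "rel_ideal f \<Longrightarrow> rel_ideal (\<lambda>w. c * f w)"

definition hom_comp :: "nat \<Rightarrow> 'a::field ser \<Rightarrow> 'a ser" where
  "hom_comp d f w = (if length w = d then f w else 0)"

text \<open>f represents 0 in the completed quotient algebra: f lies in the closure of the
  (homogeneous) relation ideal, i.e. every homogeneous component lies in the ideal.\<close>
definition zero_mod_rel :: "'a::field ser \<Rightarrow> bool" where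
  "zero_mod_rel f \<longleftrightarrow> (\<forall>d. rel_ideal (hom_comp d f))"

end

theory Submission
  imports Defs
begin

lemma subst_eq:
  assumes "\<And>x z. \<sigma> x = Some z \<longleftrightarrow> x = g z"
  shows "ser_subst \<sigma> f w = f (map g w)"
proof -
  have "{u. length u = length w \<and> map \<sigma> u = map Some w} = {map g w}"
  proof (intro set_eqI iffI)
    fix u assume "u \<in> {u. length u = length w \<and> map \<sigma> u = map Some w}"
    then have l: "length u = length w" and m: "map \<sigma> u = map Some w" by auto
    have "\<forall>k<length u. u ! k = g (w ! k)"
    proof (intro allI impI)
      fix k assume "k < length u"
      then have "map \<sigma> u ! k = map Some w ! k" using m by simp
      then have "\<sigma> (u ! k) = Some (w ! k)" using \<open>k < length u\<close> l by simp
      then show "u ! k = g (w ! k)" using assms by blast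
    qed
    then show "u \<in> {map g w}" using l by (simp add: list_eq_iff_nth_eq)
  next
    fix u assume "u \<in> {map g w}"
    then have u: "u = map g w" by simp
    have "\<forall>k<length w. \<sigma> (g (w ! k)) = Some (w ! k)" using assms by blast
    then show "u \<in> {u. length u = length w \<and> map \<sigma> u = map Some w}"
      using u by (simp add: list_eq_iff_nth_eq)
  qed
  then show ?thesis by (simp add: ser_subst_def)
qed

definition gl :: "nat \<Rightarrow> letter \<Rightarrow> letter" where
  "gl i z = (if fst z < i then z else (fst z + 1, snd z))"

definition gr :: "nat \<Rightarrow> letter \<Rightarrow> letter" where
  "gr j z = (if snd z < j then z else (fst z, snd z + 1))"

lemma lam_eq: "lam i f w = f (map (gl i) w)"
  unfolding lam_def
  by (rule subst_eq) (auto simp: gl_def split: if_splits)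

lemma rho_eq: "rho j f w = f (map (gr j) w)"
  unfolding rho_def
  by (rule subst_eq) (auto simp: gr_def split: if_splits)

lemma mul_comp: "(\<lambda>w. ser_mul f h (map g w)) = ser_mul (\<lambda>w. f (map g w)) (\<lambda>w. h (map g w))"
  by (rule ext) (simp add: ser_mul_def take_map drop_map)

lemma one_comp: "ser_one (map g w) = ser_one w"
  by (simp add: ser_one_def)

lemma pow_comp: "(\<lambda>w. ser_pow f k (map g w)) = ser_pow (\<lambda>w. f (map g w)) k"
proof (induction k)
  case 0 show ?case by (simp add: one_comp)
next
  case (Suc k)
  have "(\<lambda>w. ser_pow f (Suc k) (map g w)) = (\<lambda>w. ser_mul f (ser_pow f k) (map g w))" by simp
  also have "\<dots> = ser_mul (\<lambda>w. f (map g w)) (\<lambda>w. ser_pow f k (map g w))" by (rule mul_comp)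
  finally show ?case using Suc by simp
qed

lemma pow_comp': "ser_pow f k (map g w) = ser_pow (\<lambda>w. f (map g w)) k w"
  using pow_comp[of f k g] by (metis)

lemma exp_comp: "(\<lambda>w. ser_exp f (map g w)) = ser_exp (\<lambda>w. f (map g w))"
  by (rule ext) (simp add: ser_exp_def pow_comp')

lemma log_comp: "(\<lambda>w. ser_log f (map g w)) = ser_log (\<lambda>w. f (map g w))"
proof (rule ext)
  fix w
  have e: "(\<lambda>u. f (map g u) - ser_one (map g u)) = (\<lambda>u. f (map g u) - ser_one u)"
    by (simp add: one_comp)
  show "ser_log f (map g w) = ser_log (\<lambda>w. f (map g w)) w"
    unfolding ser_log_def Let_def
    using pow_comp'[of "\<lambda>u. f u - ser_one u" _ g w] e by simp
qed

lemma foldr_comp: "(\<lambda>w. foldr (\<lambda>y acc. ser_mul (ser_exp y) acc) ys ser_one (map g w))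
   = foldr (\<lambda>y acc. ser_mul (ser_exp y) acc) (map (\<lambda>y w. y (map g w)) ys) ser_one"
proof (induction ys)
  case Nil show ?case by (simp add: one_comp)
next
  case (Cons y ys)
  show ?case using Cons by (simp add: mul_comp exp_comp)
qed

lemma cbh_comp: "cbh ys (map g w) = cbh (map (\<lambda>y w. y (map g w)) ys) w"
proof -
  have "cbh ys (map g w) = ser_log (\<lambda>w. foldr (\<lambda>y acc. ser_mul (ser_exp y) acc) ys ser_one (map g w)) w"
    unfolding cbh_def using log_comp by metis
  then show ?thesis unfolding foldr_comp cbh_def .
qed

lemma mul_zero_left: "ser_mul (\<lambda>_. 0) h = (\<lambda>_. (0::'a::field))"
  by (rule ext) (simp add: ser_mul_def)

lemma pow_zero_Suc: "ser_pow (\<lambda>_. (0::'a::field)) (Suc k) = (\<lambda>_. 0)"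
  by (simp add: mul_zero_left)

lemma exp_zero: "ser_exp (\<lambda>_. (0::'a::field_char_0)) = ser_one"
proof (rule ext)
  fix w :: "letter list"
  have "ser_exp (\<lambda>_. (0::'a)) w = (\<Sum>k\<le>length w. ser_pow (\<lambda>_. (0::'a)) k w / fact k)"
    by (simp add: ser_exp_def)
  also have "\<dots> = (\<Sum>k\<in>{0}. ser_pow (\<lambda>_. (0::'a)) k w / fact k)"
  proof (rule sum.mono_neutral_right)
    show "\<forall>i\<in>{..length w} - {0}. ser_pow (\<lambda>_. (0::'a)) i w / fact i = 0"
    proof
      fix i assume "i \<in> {..length w} - {0}"
      then obtain k where "i = Suc k" using not0_implies_Suc by blast
      then show "ser_pow (\<lambda>_. (0::'a)) i w / fact i = 0" by (simp add: mul_zero_left)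
    qed
  qed auto
  finally show "ser_exp (\<lambda>_. (0::'a)) w = ser_one w" by simp
qed

lemma one_mul: "ser_mul ser_one h = (h::'a::field ser)"
proof (rule ext)
  fix w :: "letter list"
  have "ser_mul ser_one h w = (\<Sum>k\<le>length w. ser_one (take k w) * h (drop k w))"
    by (simp add: ser_mul_def)
  also have "\<dots> = (\<Sum>k\<in>{0}. ser_one (take k w) * h (drop k w))"
  proof (rule sum.mono_neutral_right)
    show "\<forall>i\<in>{..length w} - {0}. ser_one (take i w) * h (drop i w) = 0"
      by (auto simp: ser_one_def)
  qed auto
  finally show "ser_mul ser_one h w = h w" by (simp add: ser_one_def)
qed

lemma log_one: "ser_log (ser_one :: 'a::field_char_0 ser) = (\<lambda>_. 0)"
proof (rule ext)
  fix w :: "letter list"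
  have e: "(\<lambda>u. ser_one u - ser_one u) = (\<lambda>_. (0::'a))" by simp
  have "\<forall>k\<in>{1..length w}. ser_pow (\<lambda>_. (0::'a)) k w = 0"
    by (auto simp: Suc_le_eq gr0_conv_Suc pow_zero_Suc simp del: ser_pow.simps)
  then show "ser_log (ser_one :: 'a ser) w = 0"
    unfolding ser_log_def Let_def e by simp
qed

lemma foldr_filter:
  assumes "F x = (\<lambda>_. (0::'a::field_char_0))"
  shows "foldr (\<lambda>y acc. ser_mul (ser_exp y) acc) (map F L) ser_one
       = foldr (\<lambda>y acc. ser_mul (ser_exp y) acc) (map F (filter (\<lambda>z. z \<noteq> x) L)) ser_one"
  by (induction L) (auto simp: assms exp_zero one_mul)

lemma cbh_insert:
  assumes "F x = (\<lambda>_. (0::'a::field_char_0))" "finite A" "x \<notin> A"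
  shows "cbh (map F (sorted_list_of_set (insert x A))) = cbh (map F (sorted_list_of_set A))"
proof -
  have "filter (\<lambda>z. z \<noteq> x) (sorted_list_of_set (insert x A)) = sorted_list_of_set A"
    using assms(2,3)
    by (simp add: filter_insort_triv filter_id_conv, metis)
  then show ?thesis unfolding cbh_def using foldr_filter[of F x, OF assms(1)] by metis
qed

lemma cbh_zeros: "cbh (map (\<lambda>_. (\<lambda>_. (0::'a::field_char_0))) L) = (\<lambda>_. 0)"
proof -
  have "foldr (\<lambda>y acc. ser_mul (ser_exp y) acc) (map (\<lambda>_. (\<lambda>_. (0::'a))) L) ser_one = ser_one"
    by (induction L) (auto simp: exp_zero one_mul)
  then show ?thesis by (simp add: cbh_def log_one)
qed

lemma cancel:
  fixes T :: "nat set \<Rightarrow> 'a::comm_ring_1"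
  assumes "finite B" "x \<in> B" "card B \<le> N"
    and "\<And>K. K \<subseteq> B \<Longrightarrow> x \<notin> K \<Longrightarrow> T (insert x K) = T K"
  shows "(\<Sum>K\<in>Pow B. (-1)^(N - card K) * T K) = 0"
proof -
  define B' where "B' = B - {x}"
  have B: "B = insert x B'" and xB: "x \<notin> B'" and fB: "finite B'"
    using assms(1,2) by (auto simp: B'_def)
  have cB: "card B' < N" using B xB fB assms(3) by simp
  have disj: "Pow B' \<inter> insert x ` Pow B' = {}" using xB by auto
  have inj: "inj_on (insert x) (Pow B')" using xB
    by (smt (verit, best) PowD inj_onI insert_ident subsetD)
  have "(\<Sum>K\<in>Pow B. (-1)^(N - card K) * T K)
      = (\<Sum>K\<in>Pow B'. (-1)^(N - card K) * T K) + (\<Sum>K\<in>insert x ` Pow B'. (-1)^(N - card K) * T K)"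
    unfolding B Pow_insert using fB disj by (simp add: sum.union_disjoint)
  also have "(\<Sum>K\<in>insert x ` Pow B'. (-1)^(N - card K) * T K)
      = (\<Sum>K\<in>Pow B'. (-1)^(N - card (insert x K)) * T (insert x K))"
    using inj by (simp add: sum.reindex)
  also have "\<dots> = (\<Sum>K\<in>Pow B'. - ((-1)^(N - card K) * T K))"
  proof (rule sum.cong)
    fix K assume K: "K \<in> Pow B'"
    then have fK: "finite K" and xK: "x \<notin> K" using fB xB finite_subset by auto
    have "card K \<le> card B'" using K fB by (simp add: card_mono)
    then have "N - card K = Suc (N - card (insert x K))" using cB fK xK by simp
    moreover have "T (insert x K) = T K" using assms(4) K B xK by auto
    ultimately show "(-1)^(N - card (insert x K)) * T (insert x K) = - ((-1)^(N - card K) * T K)"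
      by simp
  qed simp
  finally show ?thesis by (simp add: sum_negf)
qed

lemma delta_comp:
  "delta n p (map g w) = (\<Sum>I\<in>Pow {1..n}. \<Sum>J\<in>Pow {1..p}.
      (-1) ^ (n + p - card I - card J) *
      cbh (map (\<lambda>i. cbh (map (\<lambda>j w. ser_gen i j (map g w)) (sorted_list_of_set J)))
               (sorted_list_of_set I)) (w::letter list)
      :: 'a::field_char_0)"
proof -
  have "\<And>I J. cbh (map (\<lambda>i. cbh (map (\<lambda>j. ser_gen i j) (sorted_list_of_set J)))
               (sorted_list_of_set I)) (map g w) =
      (cbh (map (\<lambda>i. cbh (map (\<lambda>j w. ser_gen i j (map g w)) (sorted_list_of_set J)))
               (sorted_list_of_set I)) w :: 'a)"
  proof -
    fix I J :: "nat set"
    have e: "(\<lambda>i w. cbh (map (\<lambda>j. ser_gen i j) (sorted_list_of_set J)) (map g w))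
        = (\<lambda>i. cbh (map (\<lambda>j w. (ser_gen i j :: 'a ser) (map g w)) (sorted_list_of_set J)))"
      by (rule ext, rule ext) (simp add: cbh_comp[of _ g] o_def)
    show "cbh (map (\<lambda>i. cbh (map (\<lambda>j. ser_gen i j) (sorted_list_of_set J)))
               (sorted_list_of_set I)) (map g w) =
      (cbh (map (\<lambda>i. cbh (map (\<lambda>j w. ser_gen i j (map g w)) (sorted_list_of_set J)))
               (sorted_list_of_set I)) w :: 'a)"
      by (simp add: cbh_comp[of _ g] o_def e)
  qed
  then show ?thesis by (simp add: delta_def)
qed

lemma zero_mod_zero: "zero_mod_rel (\<lambda>_. (0::'a::field))"
proof -
  have "\<And>d. hom_comp d (\<lambda>_. (0::'a)) = (\<lambda>_. 0)" by (rule ext) (simp add: hom_comp_def)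
  then show ?thesis by (simp add: zero_mod_rel_def rel_ideal.zero)
qed

lemma card_Pow_le: "I \<in> Pow {1..(n::nat)} \<Longrightarrow> card I \<le> n"
  using card_mono[of "{1..n}" I] by auto

theorem lemma1p5:
  fixes n p :: nat
  assumes "1 \<le> n" and "1 \<le> p"
  shows "(\<forall>i\<in>{1..n}. zero_mod_rel (lam i (delta n p :: 'a::field_char_0 ser)))
       \<and> (\<forall>j\<in>{1..p}. zero_mod_rel (rho j (delta n p :: 'a ser)))"
proof (intro conjI ballI)
  fix i assume i: "i \<in> {1..n}"
  have "lam i (delta n p :: 'a ser) = (\<lambda>_. 0)"
  proof (rule ext)
    fix w
    define G where "G = (\<lambda>i' j w. (ser_gen i' j :: 'a ser) (map (gl i) w))"
    have Gi: "\<And>j. G i j = (\<lambda>_. 0)"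
      by (rule ext) (auto simp: G_def ser_gen_def gl_def split: if_splits)
    define T where "T = (\<lambda>J I. cbh (map (\<lambda>i'. cbh (map (G i') (sorted_list_of_set J)))
               (sorted_list_of_set I)) w)"
    have "lam i (delta n p :: 'a ser) w = (\<Sum>I\<in>Pow {1..n}. \<Sum>J\<in>Pow {1..p}.
      (-1) ^ (n + p - card J - card I) * T J I)"
      unfolding lam_eq delta_comp T_def G_def by (simp add: add.commute)
    also have "\<dots> = (\<Sum>J\<in>Pow {1..p}. \<Sum>I\<in>Pow {1..n}. (-1) ^ (n + p - card J - card I) * T J I)"
      by (rule sum.swap)
    also have "\<dots> = (\<Sum>J\<in>Pow {1..p}. 0)"
    proof (rule sum.cong)
      fix J assume J: "J \<in> Pow {1..p}"
      show "(\<Sum>I\<in>Pow {1..n}. (-1) ^ (n + p - card J - card I) * T J I) = 0"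
      proof (rule cancel)
        show "card {1..n} \<le> n + p - card J" using card_Pow_le[OF J] by simp
        fix K assume "K \<subseteq> {1..n}" "i \<notin> K"
        then have fK: "finite K" using finite_subset by blast
        have F: "(\<lambda>i'. cbh (map (G i') (sorted_list_of_set J))) i = (\<lambda>_. 0)"
        proof -
          have "G i = (\<lambda>_ _. 0)" using Gi by (rule ext)
          then show ?thesis using cbh_zeros[of "sorted_list_of_set J"] by simp
        qed
        show "T J (insert i K) = T J K"
          unfolding T_def using cbh_insert[of "\<lambda>i'. cbh (map (G i') (sorted_list_of_set J))" i, OF F fK \<open>i \<notin> K\<close>] by simp
      qed (use i in auto)
    qed simp
    finally show "lam i (delta n p :: 'a ser) w = 0" by simp
  qed
  then show "zero_mod_rel (lam i (delta n p :: 'a ser))" by (simp add: zero_mod_zero)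
next
  fix j assume j: "j \<in> {1..p}"
  have "rho j (delta n p :: 'a ser) = (\<lambda>_. 0)"
  proof (rule ext)
    fix w
    define G where "G = (\<lambda>i' j' w. (ser_gen i' j' :: 'a ser) (map (gr j) w))"
    have Gj: "\<And>i'. G i' j = (\<lambda>_. 0)"
      by (rule ext) (auto simp: G_def ser_gen_def gr_def split: if_splits)
    define T where "T = (\<lambda>I J. cbh (map (\<lambda>i'. cbh (map (G i') (sorted_list_of_set J)))
               (sorted_list_of_set I)) w)"
    have "rho j (delta n p :: 'a ser) w = (\<Sum>I\<in>Pow {1..n}. \<Sum>J\<in>Pow {1..p}.
      (-1) ^ (n + p - card I - card J) * T I J)"
      unfolding rho_eq delta_comp T_def G_def by simp
    also have "\<dots> = (\<Sum>I\<in>Pow {1..n}. 0)"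
    proof (rule sum.cong)
      fix I assume I: "I \<in> Pow {1..n}"
      show "(\<Sum>J\<in>Pow {1..p}. (-1) ^ (n + p - card I - card J) * T I J) = 0"
      proof (rule cancel)
        show "card {1..p} \<le> n + p - card I" using card_Pow_le[OF I] by simp
        fix K assume "K \<subseteq> {1..p}" "j \<notin> K"
        then have fK: "finite K" using finite_subset by blast
        have "cbh (map (G i') (sorted_list_of_set (insert j K))) = cbh (map (G i') (sorted_list_of_set K))"
          if "True" for i' using cbh_insert[of "G i'" j, OF Gj fK \<open>j \<notin> K\<close>] by simp
        then show "T I (insert j K) = T I K"
          unfolding T_def by simp
      qed (use j in auto)
    qed simp
    finally show "rho j (delta n p :: 'a ser) w = 0" by simp
  qed
  then show "zero_mod_rel (rho j (delta n p :: 'a ser))" by (simp add: zero_mod_zero)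
qed

end
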